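(* Let $\omega\in\mathbb{R}^d$ be rationally independent, let $B\in\mathcal{M}(n,\mathbb{C})$ be in Jordan normal form with spectrum $\sigma(B)=\{\alpha_1,\dots,\alpha_l\}$ ($\alpha_i$ distinct), written as $B=\mathrm{diag}(B_1,\dots,B_l)$ where $B_i$ collects the Jordan blocks of eigenvalue $\alpha_i$, and let $U:\mathbb{T}^d\to Gl(n,\mathbb{C})$ be continuous with $\partial_\omega U=BU-U\bar B$. Write $U=(U_i^j)_{i,j=1,\dots,l}$ in the corresponding block decomposition and $\mathcal{M}=\{2i\pi\langle k,\omega\rangle:k\in\mathbb{Z}^d\}$. Then: (1) if $\alpha_i-\bar\alpha_j\notin\mathcal{M}$, the block $U_i^j$ is identically zero; in particular, if for some $j$ one has $\alpha_i-\bar\alpha_j\notin\mathcal{M}$ for all $i$, then $\det U=0$; (2) if $\alpha_i-\bar\alpha_j=2i\pi\langle k_{i,j},\omega\rangle$ for some $k_{i,j}\in\mathbb{Z}^d\setminus\{0\}$, then the only possibly nonzero Fourier coefficient of $U_i^j$ is the one indexed by $k_{i,j}$.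
   Context: $\mathbb{T}^d=\mathbb{R}^d/\mathbb{Z}^d$; $\omega$ rationally independent means $\langle k,\omega\rangle\ne0$ for $k\ne0$. $\partial_\omega U(\theta)=\frac{d}{dt}U(\theta+t\omega)|_{t=0}$ (assumed to exist). $\bar B$ is the entrywise complex conjugate. Fourier coefficients: $\hat U(k)=\int_{\mathbb{T}^d}U(\theta)e^{-2i\pi\langle k,\theta\rangle}d\theta$. *)

theory Defs
  imports "HOL-Analysis.Analysis"
begin

text \<open>Square complex matrices of size n are represented as functions
  nat \<Rightarrow> nat \<Rightarrow> complex, of which only the entries with indices below n matter.
  Points of the torus are points of real^'d, and functions on the torus are
  functions on real^'d that are 1-periodic in each coordinate.\<close>

definition mat_mult :: "nat \<Rightarrow> (nat \<Rightarrow> nat \<Rightarrow> complex) \<Rightarrow> (nat \<Rightarrow> nat \<Rightarrow> complex) \<Rightarrow> nat \<Rightarrow> nat \<Rightarrow> complex" where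
  "mat_mult n A C = (\<lambda>r s. \<Sum>m<n. A r m * C m s)"

definition mat_cnj :: "(nat \<Rightarrow> nat \<Rightarrow> complex) \<Rightarrow> nat \<Rightarrow> nat \<Rightarrow> complex" where
  "mat_cnj A = (\<lambda>r s. cnj (A r s))"

definition mat_det :: "nat \<Rightarrow> (nat \<Rightarrow> nat \<Rightarrow> complex) \<Rightarrow> complex" where
  "mat_det n A = (\<Sum>p \<in> {p. p permutes {..<n}}. of_int (sign p) * (\<Prod>i<n. A i (p i)))"

text \<open>Jordan matrix given by a list of Jordan blocks (size, eigenvalue), placed
  along the diagonal in the order of the list.\<close>

definition block_start :: "(nat \<times> complex) list \<Rightarrow> nat \<Rightarrow> nat" where
  "block_start bs k = sum_list (map fst (take k bs))"

definition in_block :: "(nat \<times> complex) list \<Rightarrow> nat \<Rightarrow> nat \<Rightarrow> bool" where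
  "in_block bs k r \<longleftrightarrow> block_start bs k \<le> r \<and> r < block_start bs (Suc k)"

definition jordan_mat :: "(nat \<times> complex) list \<Rightarrow> nat \<Rightarrow> nat \<Rightarrow> complex" where
  "jordan_mat bs = (\<lambda>r s. \<Sum>k<length bs.
     if in_block bs k r \<and> in_block bs k s then
       (if r = s then snd (bs ! k) else if s = Suc r then 1 else 0)
     else 0)"

text \<open>B (of size n) is in Jordan normal form given by the block list bs, with all
  blocks of the same eigenvalue consecutive (so B = diag(B_1,...,B_l)).\<close>

definition jordan_nf_grouped :: "nat \<Rightarrow> (nat \<Rightarrow> nat \<Rightarrow> complex) \<Rightarrow> (nat \<times> complex) list \<Rightarrow> bool" where
  "jordan_nf_grouped n B bs \<longleftrightarrow>
     (\<forall>b \<in> set bs. 0 < fst b) \<and> n = sum_list (map fst bs) \<and>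
     (\<forall>i j k. i \<le> j \<and> j \<le> k \<and> k < length bs \<and> snd (bs ! i) = snd (bs ! k)
          \<longrightarrow> snd (bs ! j) = snd (bs ! i)) \<and>
     (\<forall>r s. r < n \<and> s < n \<longrightarrow> B r s = jordan_mat bs r s)"

definition jordan_spectrum :: "(nat \<times> complex) list \<Rightarrow> complex set" where
  "jordan_spectrum bs = snd ` set bs"

definition int_inner :: "('d::finite \<Rightarrow> int) \<Rightarrow> real^'d \<Rightarrow> real" where
  "int_inner k \<omega> = (\<Sum>i\<in>UNIV. real_of_int (k i) * \<omega> $ i)"

definition rationally_independent :: "real^'d::finite \<Rightarrow> bool" where
  "rationally_independent \<omega> \<longleftrightarrow> (\<forall>k. (\<exists>i. k i \<noteq> 0) \<longrightarrow> int_inner k \<omega> \<noteq> 0)"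

definition resonances :: "real^'d::finite \<Rightarrow> complex set" where
  "resonances \<omega> = {2 * pi * \<i> * complex_of_real (int_inner k \<omega>) | k. True}"

definition torus_periodic :: "(real^'d::finite \<Rightarrow> 'a) \<Rightarrow> bool" where
  "torus_periodic f \<longleftrightarrow> (\<forall>\<theta> i. f (\<theta> + axis i 1) = f \<theta>)"

definition fourier_coeff :: "(real^'d::finite \<Rightarrow> complex) \<Rightarrow> ('d \<Rightarrow> int) \<Rightarrow> complex" where
  "fourier_coeff f k = integral (cbox 0 One)
     (\<lambda>\<theta>. f \<theta> * exp (- 2 * pi * \<i> * complex_of_real (int_inner k \<theta>)))"

end

theory Submission
  imports Defs "HOL-Analysis.Analysis"
begin

lemma sum_axis_cart: "(\<Sum>i\<in>UNIV. (x$i) *\<^sub>R axis i (1::real)) = (x::real^'d)"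
  by (simp add: vec_eq_iff axis_def mult.commute[of _ "if _ then _ else _"] if_distrib cong: if_cong)

lemma One_cart: "(One::real^'d) $ i = 1"
  using inner_sum_Basis[of "axis i (1::real)"] cart_eq_inner_axis[of "One::real^'d" i]
  by simp

lemma per_axis_nat:
  assumes "torus_periodic f" shows "f (\<theta> + real m *\<^sub>R axis i 1) = f \<theta>"
proof (induction m arbitrary: \<theta>)
  case 0 then show ?case by simp
next
  case (Suc m)
  have "\<theta> + real (Suc m) *\<^sub>R axis i 1 = (\<theta> + real m *\<^sub>R axis i 1) + axis i 1"
    by (simp add: algebra_simps)
  then show ?case using assms Suc unfolding torus_periodic_def by metis
qed

lemma per_axis_int:
  assumes "torus_periodic f" shows "f (\<theta> + of_int m *\<^sub>R axis i 1) = f \<theta>"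
proof (cases "m \<ge> 0")
  case True
  define k where "k = nat m"
  have "m = int k" using True unfolding k_def by simp
  then show ?thesis using per_axis_nat[OF assms] by simp
next
  case False
  define k where "k = nat (- m)"
  have k: "m = - int k" using False unfolding k_def by simp
  have "f \<theta> = f ((\<theta> + of_int m *\<^sub>R axis i 1) + real k *\<^sub>R axis i 1)"
    by (simp add: k algebra_simps)
  also have "\<dots> = f (\<theta> + of_int m *\<^sub>R axis i 1)" by (rule per_axis_nat[OF assms])
  finally show ?thesis by simp
qed

lemma per_int_sum:
  assumes "torus_periodic f" "finite J"
  shows "f (\<theta> + (\<Sum>i\<in>J. of_int (m i) *\<^sub>R axis i 1)) = f \<theta>"
  using assms(2)
proof (induction J arbitrary: \<theta>)
  case empty then show ?case by simp
next
  case (insert j J)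
  have "\<theta> + (\<Sum>i\<in>insert j J. of_int (m i) *\<^sub>R axis i 1)
      = (\<theta> + (\<Sum>i\<in>J. of_int (m i) *\<^sub>R axis i 1)) + of_int (m j) *\<^sub>R axis j 1"
    using insert by (simp add: algebra_simps)
  then have "f (\<theta> + (\<Sum>i\<in>insert j J. of_int (m i) *\<^sub>R axis i 1)) = f (\<theta> + (\<Sum>i\<in>J. of_int (m i) *\<^sub>R axis i 1))"
    using per_axis_int[OF assms(1), of "\<theta> + (\<Sum>i\<in>J. of_int (m i) *\<^sub>R axis i 1)" "m j" j] by (simp add: add.assoc)
  also have "\<dots> = f \<theta>" by (rule insert.IH)
  finally show ?case .
qed

lemma per_int:
  fixes v :: "real^'d"
  assumes "torus_periodic f" "\<And>i. v$i \<in> \<int>"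
  shows "f (\<theta> + v) = f \<theta>"
proof -
  define m where "m i = (THE z. v$i = of_int z)" for i
  have m: "v$i = of_int (m i)" for i
  proof -
    obtain z where "v$i = of_int z" using assms(2)[of i] by (auto elim: Ints_cases)
    then show ?thesis unfolding m_def by simp
  qed
  have "v = (\<Sum>i\<in>UNIV. of_int (m i) *\<^sub>R axis i 1)"
    using sum_axis_cart[of v] m by simp
  then show ?thesis using per_int_sum[OF assms(1), of UNIV] by simp
qed

lemma frac_in_box:
  fixes \<theta> :: "real^'d"
  shows "\<theta> - (\<chi> i. of_int (floor (\<theta>$i))) \<in> cbox 0 One"
  unfolding mem_box_cart One_cart
  apply (intro allI conjI)
   apply simp_all
  apply (rule less_imp_le)
  using floor_correct[of "\<theta>$i" for i] by (simp add: algebra_simps)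

lemma per_reduce:
  fixes \<theta> :: "real^'d"
  assumes "torus_periodic f"
  shows "\<exists>\<theta>'\<in>cbox 0 One. f \<theta> = f \<theta>'"
proof -
  let ?v = "(\<chi> i. of_int (floor (\<theta>$i))) :: real^'d"
  have "f ((\<theta> - ?v) + ?v) = f (\<theta> - ?v)" by (rule per_int[OF assms]) auto
  then show ?thesis using frac_in_box[of \<theta>] by force
qed

lemma cont_shift:
  fixes g :: "real^'d \<Rightarrow> complex"
  assumes "continuous_on UNIV g"
  shows "continuous_on UNIV (\<lambda>\<theta>. g (\<theta> + y))"
  by (rule continuous_on_compose2[OF assms]) (auto intro!: continuous_intros)

lemma per_shift:
  assumes "torus_periodic g"
  shows "torus_periodic (\<lambda>\<theta>. g (\<theta> + y))"
  using assms unfolding torus_periodic_def by (metis add.assoc add.commute)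

lemma integral_shift:
  fixes h :: "real^'d \<Rightarrow> complex"
  assumes "continuous_on UNIV h"
  shows "integral (cbox a b) (\<lambda>x. h (x + c)) = integral (cbox (a + c) (b + c)) h"
proof -
  have "(h has_integral integral (cbox (a+c) (b+c)) h) (cbox (a+c) (b+c))"
    by (intro integrable_integral integrable_continuous continuous_on_subset[OF assms]) auto
  from has_integral_affinity[OF this, of 1 c]
  have "((\<lambda>x. h (x + c)) has_integral integral (cbox (a+c) (b+c)) h) ((\<lambda>x. x + - c) ` cbox (a+c) (b+c))"
    by (simp add: add.commute)
  moreover have "(\<lambda>x. x + - c) ` cbox (a+c) (b+c) = cbox a b"
    using cbox_shift[of "-c" "a+c" "b+c"] by (simp add: add.commute)
  ultimately show ?thesis by (simp add: integral_unique)
qed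

lemma sum_Basis_cart: "(\<Sum>x\<in>(Basis::(real^'d) set). x $ i) = 1"
  using One_cart[of i] by simp

lemma inner_axis_cart1: "(x::real^'d) \<bullet> axis i 1 = x $ i"
  by (simp add: cart_eq_inner_axis)

lemma split_low:
  fixes c :: real
  assumes "c \<le> 1"
  shows "cbox 0 One \<inter> {x::real^'d. x \<bullet> axis i 1 \<le> c} = cbox 0 (\<chi> j. if j = i then c else 1)"
proof (rule set_eqI)
  fix x :: "real^'d"
  show "x \<in> cbox 0 One \<inter> {x::real^'d. x \<bullet> axis i 1 \<le> c} \<longleftrightarrow> x \<in> cbox 0 (\<chi> j. if j = i then c else 1)"
    unfolding Int_iff mem_Collect_eq mem_box_cart One_cart inner_axis_cart1 vec_lambda_beta zero_index
  proof (intro iffI allI conjI)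
    fix j assume "(\<forall>j. 0 \<le> x $ j \<and> x $ j \<le> 1) \<and> x $ i \<le> c"
    then show "0 \<le> x$j" "x $ j \<le> (if j = i then c else 1)" by auto
  next
    fix j assume a: "\<forall>j. 0 \<le> x $ j \<and> x $ j \<le> (if j = i then c else 1)"
    show "0 \<le> x$j" using a by blast
    show "x $ j \<le> 1" using a assms by (smt (verit))
    show "x $ i \<le> c" using a by (metis (full_types))
  qed
qed

lemma split_high:
  fixes c :: real
  assumes "0 \<le> c"
  shows "cbox 0 One \<inter> {x::real^'d. c \<le> x \<bullet> axis i 1} = cbox (\<chi> j. if j = i then c else 0) One"
proof (rule set_eqI)
  fix x :: "real^'d"
  show "x \<in> cbox 0 One \<inter> {x::real^'d. c \<le> x \<bullet> axis i 1} \<longleftrightarrow> x \<in> cbox (\<chi> j. if j = i then c else 0) One"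
    unfolding Int_iff mem_Collect_eq mem_box_cart One_cart inner_axis_cart1 vec_lambda_beta zero_index
  proof (intro iffI allI conjI)
    fix j assume "(\<forall>j. 0 \<le> x $ j \<and> x $ j \<le> 1) \<and> c \<le> x $ i"
    then show "(if j = i then c else 0) \<le> x$j" "x $ j \<le> 1" by auto
  next
    fix j assume a: "\<forall>j. (if j = i then c else 0) \<le> x $ j \<and> x $ j \<le> 1"
    show "x $ j \<le> 1" using a by blast
    show "0 \<le> x $ j" using a assms by (smt (verit))
    show "c \<le> x $ i" using a by (metis (full_types))
  qed
qed

lemma shift_coord01:
  fixes g :: "real^'d \<Rightarrow> complex"
  assumes cg: "continuous_on UNIV g" and pg: "torus_periodic g" and s: "0 \<le> s" "s \<le> 1"
  shows "integral (cbox 0 One) (\<lambda>\<theta>. g (\<theta> + s *\<^sub>R axis i 1)) = integral (cbox 0 One) g"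
proof -
  define lo where "lo c = ((\<chi> j. if j = i then c else 0) :: real^'d)" for c
  define hi where "hi c = ((\<chi> j. if j = i then c else 1) :: real^'d)" for c
  let ?e = "axis i 1 :: real^'d"
  let ?G = "\<lambda>\<theta>. g (\<theta> + s *\<^sub>R ?e)"
  have eB: "?e \<in> Basis" by (simp add: Basis_vec_def) blast
  have intG: "?G integrable_on cbox 0 One"
    by (intro integrable_continuous continuous_on_subset[OF cont_shift[OF cg]]) auto
  have intg: "g integrable_on cbox 0 One"
    by (intro integrable_continuous continuous_on_subset[OF cg]) auto
  have "integral (cbox 0 One) ?G = integral (cbox 0 (hi (1-s))) ?G + integral (cbox (lo (1-s)) One) ?G"
    using integral_split[OF intG eB, of "1-s"] split_low[of "1-s" i] split_high[of "1-s" i] s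
    unfolding lo_def hi_def by simp
  also have "integral (cbox 0 (hi (1-s))) ?G = integral (cbox (lo s) One) g"
  proof -
    have "integral (cbox 0 (hi (1-s))) ?G = integral (cbox (0 + s *\<^sub>R ?e) (hi (1-s) + s *\<^sub>R ?e)) g"
      by (rule integral_shift[OF cg])
    moreover have "0 + s *\<^sub>R ?e = lo s" "hi (1-s) + s *\<^sub>R ?e = One"
      by (auto simp: lo_def hi_def vec_eq_iff axis_def One_cart sum_Basis_cart)
    ultimately show ?thesis by simp
  qed
  also have "integral (cbox (lo (1-s)) One) ?G = integral (cbox 0 (hi s)) g"
  proof -
    have "?G = (\<lambda>\<theta>. g (\<theta> + (s - 1) *\<^sub>R ?e))"
    proof
      fix \<theta>
      have "g (\<theta> + s *\<^sub>R ?e) = g ((\<theta> + (s - 1) *\<^sub>R ?e) + ?e)"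
        by (simp add: algebra_simps)
      then show "?G \<theta> = g (\<theta> + (s - 1) *\<^sub>R ?e)" using pg unfolding torus_periodic_def by simp
    qed
    then have "integral (cbox (lo (1-s)) One) ?G = integral (cbox (lo (1-s) + (s - 1) *\<^sub>R ?e) (One + (s - 1) *\<^sub>R ?e)) g"
      using integral_shift[OF cg] by simp
    moreover have "lo (1-s) + (s - 1) *\<^sub>R ?e = 0" "One + (s - 1) *\<^sub>R ?e = hi s"
      by (auto simp: lo_def hi_def vec_eq_iff axis_def One_cart sum_Basis_cart)
    ultimately show ?thesis by simp
  qed
  also have "integral (cbox (lo s) One) g + integral (cbox 0 (hi s)) g = integral (cbox 0 One) g"
    using integral_split[OF intg eB, of "s"] split_low[of "s" i] split_high[of "s" i] s
    unfolding lo_def hi_def by simp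
  finally show ?thesis .
qed

lemma shift_coord:
  fixes g :: "real^'d \<Rightarrow> complex"
  assumes cg: "continuous_on UNIV g" and pg: "torus_periodic g"
  shows "integral (cbox 0 One) (\<lambda>\<theta>. g (\<theta> + s *\<^sub>R axis i 1)) = integral (cbox 0 One) g"
proof -
  let ?f = "s - of_int (floor s)"
  have "g (\<theta> + s *\<^sub>R axis i 1) = g (\<theta> + ?f *\<^sub>R axis i 1)" for \<theta>
  proof -
    have "g (\<theta> + s *\<^sub>R axis i 1) = g ((\<theta> + ?f *\<^sub>R axis i 1) + of_int (floor s) *\<^sub>R axis i 1)"
      by (simp add: algebra_simps)
    then show ?thesis using per_axis_int[OF pg] by simp
  qed
  moreover have "0 \<le> ?f" "?f \<le> 1" using floor_correct[of s] by linarith+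
  ultimately show ?thesis using shift_coord01[OF cg pg] by simp
qed

lemma shift_sum:
  fixes x :: "real^'d"
  assumes "finite J"
  shows "\<forall>g::real^'d \<Rightarrow> complex. continuous_on UNIV g \<and> torus_periodic g \<longrightarrow>
     integral (cbox 0 One) (\<lambda>\<theta>. g (\<theta> + (\<Sum>i\<in>J. x$i *\<^sub>R axis i 1))) = integral (cbox 0 One) g"
  using assms
proof (induction J)
  case empty then show ?case by simp
next
  case (insert j J)
  show ?case
  proof (intro allI impI)
    fix g :: "real^'d \<Rightarrow> complex"
    assume gg: "continuous_on UNIV g \<and> torus_periodic g"
    let ?g = "\<lambda>\<theta>. g (\<theta> + x$j *\<^sub>R axis j 1)"
    have "(\<lambda>\<theta>. g (\<theta> + (\<Sum>i\<in>insert j J. x$i *\<^sub>R axis i 1))) = (\<lambda>\<theta>. ?g (\<theta> + (\<Sum>i\<in>J. x$i *\<^sub>R axis i 1)))"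
      using insert by (simp add: algebra_simps)
    moreover have "integral (cbox 0 One) (\<lambda>\<theta>. ?g (\<theta> + (\<Sum>i\<in>J. x$i *\<^sub>R axis i 1))) = integral (cbox 0 One) ?g"
      using insert.IH cont_shift per_shift gg by blast
    moreover have "integral (cbox 0 One) ?g = integral (cbox 0 One) g"
      using shift_coord gg by blast
    ultimately show "integral (cbox 0 One) (\<lambda>\<theta>. g (\<theta> + (\<Sum>i\<in>insert j J. x$i *\<^sub>R axis i 1))) = integral (cbox 0 One) g"
      by simp
  qed
qed

lemma integral_translate_per:
  fixes g :: "real^'d \<Rightarrow> complex"
  assumes "continuous_on UNIV g" "torus_periodic g"
  shows "integral (cbox 0 One) (\<lambda>\<theta>. g (\<theta> + x)) = integral (cbox 0 One) g"
  using shift_sum[of UNIV x] assms sum_axis_cart[of x] by simp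

lemma integral_deriv_zero:
  fixes g D :: "real^'d \<Rightarrow> complex" and \<omega> :: "real^'d"
  assumes cg: "continuous_on UNIV g" and pg: "torus_periodic g" and cD: "continuous_on UNIV D"
    and dg: "\<And>\<theta>. ((\<lambda>t. g (\<theta> + t *\<^sub>R \<omega>)) has_vector_derivative D \<theta>) (at 0)"
  shows "integral (cbox 0 One) D = 0"
proof -
  have d: "((\<lambda>x. g (t + x *\<^sub>R \<omega>)) has_vector_derivative D (t + x *\<^sub>R \<omega>)) (at x within UNIV)" for x t
  proof -
    have 1: "((\<lambda>s. g ((t + x *\<^sub>R \<omega>) + s *\<^sub>R \<omega>)) has_vector_derivative D (t + x *\<^sub>R \<omega>)) (at ((\<lambda>y. y - x) x))"
      using dg by simp
    have 2: "((\<lambda>y::real. y - x) has_vector_derivative 1) (at x)"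
      by (auto intro!: derivative_eq_intros)
    have "(((\<lambda>s. g ((t + x *\<^sub>R \<omega>) + s *\<^sub>R \<omega>)) \<circ> (\<lambda>y. y - x)) has_vector_derivative 1 *\<^sub>R D (t + x *\<^sub>R \<omega>)) (at x)"
      by (rule vector_diff_chain_at[OF 2 1])
    moreover have "((\<lambda>s. g ((t + x *\<^sub>R \<omega>) + s *\<^sub>R \<omega>)) \<circ> (\<lambda>y. y - x)) = (\<lambda>y. g (t + y *\<^sub>R \<omega>))"
      by (auto simp: algebra_simps)
    ultimately show ?thesis by simp
  qed
  have cont2: "continuous_on (UNIV \<times> cbox 0 One) (\<lambda>(x, t). D (t + x *\<^sub>R \<omega>))"
    unfolding case_prod_beta
    by (rule continuous_on_compose2[OF cD]) (auto intro!: continuous_intros)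
  have int: "(\<lambda>t. g (t + x *\<^sub>R \<omega>)) integrable_on cbox 0 One" for x
    by (intro integrable_continuous continuous_on_subset[OF cont_shift[OF cg]]) auto
  have L: "((\<lambda>x. integral (cbox 0 One) (\<lambda>t. g (t + x *\<^sub>R \<omega>))) has_vector_derivative
      integral (cbox 0 One) (\<lambda>t. D (t + 0 *\<^sub>R \<omega>))) (at 0 within UNIV)"
    by (rule leibniz_rule_vector_derivative[where U=UNIV and f="\<lambda>x t. g (t + x *\<^sub>R \<omega>)" and fx="\<lambda>x t. D (t + x *\<^sub>R \<omega>)"])
       (use d int cont2 in auto)
  have "(\<lambda>x. integral (cbox 0 One) (\<lambda>t. g (t + x *\<^sub>R \<omega>))) = (\<lambda>x. integral (cbox 0 One) g)"
    using integral_translate_per[OF cg pg] by simp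
  with L have "((\<lambda>x. integral (cbox 0 One) g) has_vector_derivative integral (cbox 0 One) D) (at 0)"
    by simp
  moreover have "((\<lambda>x::real. integral (cbox 0 One) g) has_vector_derivative 0) (at 0)"
    by (rule has_vector_derivative_const)
  ultimately show ?thesis using vector_derivative_unique_at by blast
qed

definition emk :: "('d::finite \<Rightarrow> int) \<Rightarrow> real^'d \<Rightarrow> complex" where
  "emk k \<theta> = exp (- 2 * pi * \<i> * complex_of_real (int_inner k \<theta>))"

lemma fourier_coeff_emk: "fourier_coeff f k = integral (cbox 0 One) (\<lambda>\<theta>. f \<theta> * emk k \<theta>)"
  unfolding fourier_coeff_def emk_def by simp

lemma int_inner_add: "int_inner k (x + y) = int_inner k x + int_inner k y"
  unfolding int_inner_def by (simp add: algebra_simps sum.distrib)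

lemma int_inner_scale: "int_inner k (t *\<^sub>R x) = t * int_inner k x"
  unfolding int_inner_def by (simp add: algebra_simps sum_distrib_left)

lemma int_inner_axis: "int_inner k (axis i 1) = of_int (k i)"
  unfolding int_inner_def axis_def by (simp add: if_distrib cong: if_cong)

lemma int_inner_minus: "int_inner (\<lambda>j. - k j) x = - int_inner k x"
  unfolding int_inner_def by (simp add: sum_negf)

lemma int_inner_plus: "int_inner (\<lambda>j. k j + l j) x = int_inner k x + int_inner l x"
  unfolding int_inner_def by (simp add: algebra_simps sum.distrib)

lemma cont_int_inner: "continuous_on UNIV (int_inner k)"
  unfolding int_inner_def[abs_def] by (intro continuous_intros)

lemma cont_emk: "continuous_on UNIV (emk k)"
  unfolding emk_def[abs_def]
  by (intro continuous_intros continuous_on_compose2[OF continuous_on_of_real cont_int_inner]) auto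

lemma emk_per: "torus_periodic (emk k)"
  unfolding torus_periodic_def
proof (intro allI)
  fix \<theta> :: "real^'a" and i
  show "emk k (\<theta> + axis i 1) = emk k \<theta>"
    unfolding emk_def int_inner_add int_inner_axis exp_eq
    by (rule exI[of _ "- k i"]) (simp add: algebra_simps)
qed

lemma emk_deriv:
  "((\<lambda>t. emk k (\<theta> + t *\<^sub>R \<omega>)) has_vector_derivative
     (- 2 * pi * \<i> * complex_of_real (int_inner k \<omega>)) * emk k \<theta>) (at 0)"
proof -
  let ?a = "int_inner k \<theta>" and ?b = "int_inner k \<omega>"
  have "((\<lambda>z. exp (- 2 * pi * \<i> * (complex_of_real ?a + z * complex_of_real ?b))) has_field_derivative
      exp (- 2 * pi * \<i> * (complex_of_real ?a + of_real 0 * complex_of_real ?b)) * (- 2 * pi * \<i> * complex_of_real ?b)) (at (of_real 0))"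
    by (auto intro!: derivative_eq_intros)
  from has_vector_derivative_real_field[OF this]
  have "((\<lambda>t. exp (- 2 * pi * \<i> * (complex_of_real ?a + of_real t * complex_of_real ?b))) has_vector_derivative
      exp (- 2 * pi * \<i> * (complex_of_real ?a + of_real 0 * complex_of_real ?b)) * (- 2 * pi * \<i> * complex_of_real ?b)) (at 0)" .
  moreover have "(\<lambda>t. emk k (\<theta> + t *\<^sub>R \<omega>)) = (\<lambda>t. exp (- 2 * pi * \<i> * (complex_of_real ?a + of_real t * complex_of_real ?b)))"
    unfolding emk_def int_inner_add int_inner_scale by simp
  ultimately show ?thesis unfolding emk_def by (simp add: mult.commute)
qed

lemma fourier_eq:
  fixes \<omega> :: "real^'d" and U :: "real^'d \<Rightarrow> nat \<Rightarrow> nat \<Rightarrow> complex"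
  assumes per: "torus_periodic U"
    and cont: "\<And>r s. r < n \<Longrightarrow> s < n \<Longrightarrow> continuous_on UNIV (\<lambda>\<theta>. U \<theta> r s)"
    and eq: "\<And>\<theta> r s. r < n \<Longrightarrow> s < n \<Longrightarrow>
        ((\<lambda>t. U (\<theta> + t *\<^sub>R \<omega>) r s) has_vector_derivative
          (mat_mult n B (U \<theta>) r s - mat_mult n (U \<theta>) (mat_cnj B) r s)) (at 0)"
    and rs: "r < n" "s < n"
  shows "2 * pi * \<i> * complex_of_real (int_inner k \<omega>) * fourier_coeff (\<lambda>\<theta>. U \<theta> r s) k =
    mat_mult n B (\<lambda>a b. fourier_coeff (\<lambda>\<theta>. U \<theta> a b) k) r s -
    mat_mult n (\<lambda>a b. fourier_coeff (\<lambda>\<theta>. U \<theta> a b) k) (mat_cnj B) r s"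
proof -
  define c where "c = - 2 * pi * \<i> * complex_of_real (int_inner k \<omega>)"
  define E where "E = emk k"
  define F where "F a b = fourier_coeff (\<lambda>\<theta>. U \<theta> a b) k" for a b
  define M where "M \<theta> = mat_mult n B (U \<theta>) r s - mat_mult n (U \<theta>) (mat_cnj B) r s" for \<theta>
  define g where "g \<theta> = U \<theta> r s * E \<theta>" for \<theta>
  define D where "D \<theta> = U \<theta> r s * (c * E \<theta>) + M \<theta> * E \<theta>" for \<theta>
  have cE: "continuous_on UNIV E" unfolding E_def by (rule cont_emk)
  have cg: "continuous_on UNIV g" unfolding g_def by (rule continuous_on_mult[OF cont[OF rs] cE])
  have pg: "torus_periodic g" unfolding torus_periodic_def
  proof (intro allI)
    fix \<theta> :: "real^'d" and i
    have "U (\<theta> + axis i 1) = U \<theta>" using per unfolding torus_periodic_def by blast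
    moreover have "E (\<theta> + axis i 1) = E \<theta>" using emk_per[of k] unfolding E_def torus_periodic_def by blast
    ultimately show "g (\<theta> + axis i 1) = g \<theta>" unfolding g_def by simp
  qed
  have cM: "continuous_on UNIV M"
    unfolding M_def mat_mult_def mat_cnj_def using rs
    by (auto intro!: continuous_intros cont)
  have cD: "continuous_on UNIV D" unfolding D_def
    by (rule continuous_on_add[OF continuous_on_mult[OF cont[OF rs] continuous_on_mult[OF continuous_on_const cE]] continuous_on_mult[OF cM cE]])
  have dg: "((\<lambda>t. g (\<theta> + t *\<^sub>R \<omega>)) has_vector_derivative D \<theta>) (at 0)" for \<theta>
  proof -
    have "((\<lambda>t. U (\<theta> + t *\<^sub>R \<omega>) r s * E (\<theta> + t *\<^sub>R \<omega>)) has_vector_derivative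
       U (\<theta> + 0 *\<^sub>R \<omega>) r s * (c * E \<theta>) + M \<theta> * E (\<theta> + 0 *\<^sub>R \<omega>)) (at 0 within UNIV)"
      by (rule has_vector_derivative_mult) (use eq[OF rs] emk_deriv in \<open>auto simp: M_def E_def c_def\<close>)
    then show ?thesis unfolding g_def D_def by simp
  qed
  have I0: "integral (cbox 0 One) D = 0" by (rule integral_deriv_zero[OF cg pg cD dg])
  have hF: "((\<lambda>\<theta>. U \<theta> a b * E \<theta>) has_integral F a b) (cbox 0 One)" if "a < n" "b < n" for a b
  proof -
    have "(\<lambda>\<theta>. U \<theta> a b * E \<theta>) integrable_on cbox 0 One"
      by (rule integrable_continuous, rule continuous_on_subset[OF continuous_on_mult[OF cont[OF that] cE]]) auto
    then show ?thesis unfolding F_def fourier_coeff_emk E_def by (rule integrable_integral)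
  qed
  have Deq: "D \<theta> = c * (U \<theta> r s * E \<theta>) + ((\<Sum>m<n. B r m * (U \<theta> m s * E \<theta>)) - (\<Sum>m<n. cnj (B m s) * (U \<theta> r m * E \<theta>)))" for \<theta>
    unfolding D_def M_def mat_mult_def mat_cnj_def
    by (simp add: algebra_simps sum_distrib_right sum_distrib_left)
  have HD: "(D has_integral (c * F r s + ((\<Sum>m<n. B r m * F m s) - (\<Sum>m<n. cnj (B m s) * F r m)))) (cbox 0 One)"
    unfolding Deq[abs_def]
    by (intro has_integral_add has_integral_diff has_integral_mult_right has_integral_sum hF rs) auto
  then have "c * F r s + ((\<Sum>m<n. B r m * F m s) - (\<Sum>m<n. cnj (B m s) * F r m)) = 0"
    using I0 integral_unique[OF HD] by simp
  then show ?thesis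
    unfolding mat_mult_def mat_cnj_def F_def[symmetric] c_def
    by (simp add: algebra_simps)
qed


lemma bs_Suc: "k < length bs \<Longrightarrow> block_start bs (Suc k) = block_start bs k + fst (bs ! k)"
  unfolding block_start_def by (simp add: take_Suc_conv_app_nth)

lemma bs_mono: "k \<le> k' \<Longrightarrow> block_start bs k \<le> block_start bs k'"
proof -
  assume "k \<le> k'"
  then obtain j where "k' = k + j" using le_Suc_ex by blast
  then show ?thesis unfolding block_start_def by (simp add: take_add)
qed

lemma bs_len: "length bs \<le> k \<Longrightarrow> block_start bs k = sum_list (map fst bs)"
  unfolding block_start_def by simp

lemma in_block_len: "in_block bs k r \<Longrightarrow> k < length bs"
  unfolding in_block_def using bs_len[of bs k] bs_len[of bs "Suc k"] by (cases "length bs \<le> k") auto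

lemma in_block_lt: "in_block bs k r \<Longrightarrow> r < sum_list (map fst bs)"
proof -
  assume a: "in_block bs k r"
  then have "Suc k \<le> length bs" using in_block_len by (simp add: Suc_leI)
  then have "block_start bs (Suc k) \<le> block_start bs (length bs)" by (rule bs_mono)
  then show ?thesis using a bs_len[of bs "length bs"] unfolding in_block_def by simp
qed

lemma in_block_unique: "in_block bs k r \<Longrightarrow> in_block bs k' r \<Longrightarrow> k = k'"
proof (rule ccontr)
  assume a: "in_block bs k r" "in_block bs k' r" "k \<noteq> k'"
  {
    fix a b assume ab: "in_block bs a r" "in_block bs b r" "a < b"
    then have "block_start bs (Suc a) \<le> block_start bs b" by (intro bs_mono) simp
    then have False using ab unfolding in_block_def by simp
  }
  then show False using a by (metis linorder_neqE_nat)
qed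

lemma in_block_exists: "r < sum_list (map fst bs) \<Longrightarrow> \<exists>k. in_block bs k r"
proof -
  assume r: "r < sum_list (map fst bs)"
  have ex: "\<exists>k. r < block_start bs (Suc k)"
    using r bs_len[of bs "Suc (length bs)"] by (intro exI[of _ "length bs"]) simp
  define k where "k = (LEAST k. r < block_start bs (Suc k))"
  have k1: "r < block_start bs (Suc k)" unfolding k_def by (rule LeastI_ex[OF ex])
  have k2: "block_start bs k \<le> r"
  proof (cases k)
    case 0 then show ?thesis by (simp add: block_start_def)
  next
    case (Suc j)
    have "\<not> r < block_start bs (Suc j)"
      using not_less_Least[of j "\<lambda>k. r < block_start bs (Suc k)"] Suc unfolding k_def by simp
    then show ?thesis using Suc by simp
  qed
  show ?thesis using k1 k2 unfolding in_block_def by blast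
qed

definition blk :: "(nat \<times> complex) list \<Rightarrow> nat \<Rightarrow> nat" where
  "blk bs r = (THE k. in_block bs k r)"

lemma blk_in: "r < sum_list (map fst bs) \<Longrightarrow> in_block bs (blk bs r) r"
  unfolding blk_def using in_block_exists in_block_unique by (metis theI)

lemma blk_eq: "in_block bs k r \<Longrightarrow> blk bs r = k"
  using blk_in in_block_lt in_block_unique by metis

lemma blk_len: "r < sum_list (map fst bs) \<Longrightarrow> blk bs r < length bs"
  using blk_in in_block_len by blast

lemma jordan_mat_blk:
  assumes r: "r < sum_list (map fst bs)" and m: "m < sum_list (map fst bs)"
  shows "jordan_mat bs r m = (if blk bs m = blk bs r then
       (if r = m then snd (bs ! blk bs r) else if m = Suc r then 1 else 0) else 0)"
proof -
  let ?X = "\<lambda>k. if r = m then snd (bs ! k) else if m = Suc r then (1::complex) else 0"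
  have "jordan_mat bs r m = (\<Sum>k<length bs. if k = blk bs r then (if in_block bs k m then ?X k else 0) else 0)"
    unfolding jordan_mat_def
    by (rule sum.cong) (use blk_in[OF r] in \<open>auto dest: blk_eq\<close>)
  also have "\<dots> = (if in_block bs (blk bs r) m then ?X (blk bs r) else 0)"
    using blk_len[OF r] by (simp add: sum.delta)
  also have "in_block bs (blk bs r) m \<longleftrightarrow> blk bs m = blk bs r"
    using blk_in[OF m] blk_eq by metis
  finally show ?thesis by simp
qed

lemma jnf_B:
  assumes jnf: "jordan_nf_grouped n B bs" and r: "r < n" and m: "m < n"
  shows "B r m = (if blk bs m = blk bs r then
       (if r = m then snd (bs ! blk bs r) else if m = Suc r then 1 else 0) else 0)"
  using jnf r m jordan_mat_blk[of r bs m] unfolding jordan_nf_grouped_def by auto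

lemma jnf_diag:
  assumes jnf: "jordan_nf_grouped n B bs" and r: "r < n"
  shows "B r r = snd (bs ! blk bs r)"
  using jnf_B[OF jnf r r] by simp

lemma jnf_spec:
  assumes jnf: "jordan_nf_grouped n B bs" and r: "r < n"
  shows "B r r \<in> jordan_spectrum bs"
proof -
  have "blk bs r < length bs" using jnf r blk_len unfolding jordan_nf_grouped_def by auto
  then show ?thesis unfolding jordan_spectrum_def jnf_diag[OF jnf r] by auto
qed

lemma jnf_spec_ex:
  assumes jnf: "jordan_nf_grouped n B bs" and b: "\<beta> \<in> jordan_spectrum bs"
  shows "\<exists>s<n. B s s = \<beta>"
proof -
  obtain k where k: "k < length bs" "\<beta> = snd (bs ! k)"
    using b unfolding jordan_spectrum_def by (auto simp: in_set_conv_nth)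
  have pos: "0 < fst (bs ! k)" using jnf k(1) unfolding jordan_nf_grouped_def by auto
  have ib: "in_block bs k (block_start bs k)"
    unfolding in_block_def using bs_Suc[OF k(1)] pos by simp
  have n: "n = sum_list (map fst bs)" using jnf unfolding jordan_nf_grouped_def by auto
  have s: "block_start bs k < n" using in_block_lt[OF ib] n by simp
  show ?thesis
    using jnf_diag[OF jnf s] blk_eq[OF ib] k s by auto
qed

lemma jnf_left:
  assumes jnf: "jordan_nf_grouped n B bs" and r: "r < n"
  shows "mat_mult n B C r s = B r r * C r s +
     (if Suc r < n \<and> blk bs (Suc r) = blk bs r then C (Suc r) s else 0)"
proof -
  have "mat_mult n B C r s = (\<Sum>m<n. (if m = r then B r r * C r s else 0) +
      (if m = Suc r then (if blk bs (Suc r) = blk bs r then C (Suc r) s else 0) else 0))"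
    unfolding mat_mult_def
    by (rule sum.cong) (auto simp: jnf_B[OF jnf r] jnf_diag[OF jnf r])
  also have "\<dots> = B r r * C r s + (if Suc r < n \<and> blk bs (Suc r) = blk bs r then C (Suc r) s else 0)"
    using r by (simp add: sum.distrib sum.delta)
  finally show ?thesis .
qed

lemma jnf_right:
  assumes jnf: "jordan_nf_grouped n B bs" and s: "s < n"
  shows "mat_mult n C (mat_cnj B) r s = C r s * cnj (B s s) +
     (if 0 < s \<and> blk bs (s - 1) = blk bs s then C r (s - 1) else 0)"
proof -
  have "mat_mult n C (mat_cnj B) r s = (\<Sum>m<n. (if m = s then C r s * cnj (B s s) else 0) +
      (if m = s - 1 then (if 0 < s \<and> blk bs (s - 1) = blk bs s then C r (s - 1) else 0) else 0))"
    unfolding mat_mult_def mat_cnj_def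
  proof (rule sum.cong)
    fix m assume "m \<in> {..<n}"
    then have m: "m < n" by simp
    show "C r m * cnj (B m s) = (if m = s then C r s * cnj (B s s) else 0) +
      (if m = s - 1 then (if 0 < s \<and> blk bs (s - 1) = blk bs s then C r (s - 1) else 0) else 0)"
      using jnf_B[OF jnf m s] jnf_diag[OF jnf s] by auto
  qed simp
  also have "\<dots> = C r s * cnj (B s s) + (if 0 < s \<and> blk bs (s - 1) = blk bs s then C r (s - 1) else 0)"
    using s by (simp add: sum.distrib sum.delta less_imp_diff_less)
  finally show ?thesis .
qed

lemma jordan_sylvester:
  assumes jnf: "jordan_nf_grouped n B bs"
    and eqC: "\<And>r s. r < n \<Longrightarrow> s < n \<Longrightarrow> lam * C r s = mat_mult n B C r s - mat_mult n C (mat_cnj B) r s"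
  shows "r < n \<Longrightarrow> s < n \<Longrightarrow> B r r - cnj (B s s) \<noteq> lam \<Longrightarrow> C r s = 0"
proof (induction "(n - r) + s" arbitrary: r s rule: less_induct)
  case less
  note r = less.prems(1) and s = less.prems(2) and ne = less.prems(3)
  have X: "(if Suc r < n \<and> blk bs (Suc r) = blk bs r then C (Suc r) s else 0) = 0"
  proof (cases "Suc r < n \<and> blk bs (Suc r) = blk bs r")
    case True
    then have "B (Suc r) (Suc r) = B r r" using jnf_diag[OF jnf r] jnf_diag[OF jnf, of "Suc r"] by simp
    moreover have m: "(n - Suc r) + s < (n - r) + s" using True by linarith
    ultimately show ?thesis using less.hyps[OF m] True s ne by simp
  qed auto
  have Y: "(if 0 < s \<and> blk bs (s - 1) = blk bs s then C r (s - 1) else 0) = 0"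
  proof (cases "0 < s \<and> blk bs (s - 1) = blk bs s")
    case True
    then have "B (s - 1) (s - 1) = B s s" using jnf_diag[OF jnf s] jnf_diag[OF jnf, of "s - 1"] s by simp
    moreover have m: "(n - r) + (s - 1) < (n - r) + s" using True by linarith
    ultimately show ?thesis using less.hyps[OF m] True s r ne by simp
  qed auto
  have "lam * C r s = B r r * C r s - C r s * cnj (B s s)"
    using eqC[OF r s] jnf_left[OF jnf r, of C s] jnf_right[OF jnf s, of C r] X Y by simp
  then have "(B r r - cnj (B s s) - lam) * C r s = 0" by (simp add: algebra_simps)
  then show ?case using ne by simp
qed


definition tp :: "(real^'d \<Rightarrow> complex) \<Rightarrow> bool" where
  "tp P \<longleftrightarrow> (\<exists>K c. finite K \<and> (\<forall>\<theta>. P \<theta> = (\<Sum>k\<in>K. c k * emk k \<theta>)))"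

lemma emk_zero: "emk (\<lambda>_. 0) \<theta> = 1"
  unfolding emk_def int_inner_def by simp

lemma emk_mult: "emk k \<theta> * emk l \<theta> = emk (\<lambda>j. k j + l j) \<theta>"
  unfolding emk_def int_inner_plus by (simp add: exp_add[symmetric] algebra_simps)

lemma tp_emk: "tp (emk k)"
  unfolding tp_def by (intro exI[of _ "{k}"] exI[of _ "\<lambda>_. 1"]) simp

lemma tp_const: "tp (\<lambda>_. a)"
  unfolding tp_def by (intro exI[of _ "{\<lambda>_. 0}"] exI[of _ "\<lambda>_. a"]) (simp add: emk_zero)

lemma tp_scale: "tp P \<Longrightarrow> tp (\<lambda>\<theta>. a * P \<theta>)"
  unfolding tp_def
proof (elim exE conjE)
  fix K c assume K: "finite K" "\<forall>\<theta>. P \<theta> = (\<Sum>k\<in>K. c k * emk k \<theta>)"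
  show "\<exists>K c. finite K \<and> (\<forall>\<theta>. a * P \<theta> = (\<Sum>k\<in>K. c k * emk k \<theta>))"
    by (intro exI[of _ K] exI[of _ "\<lambda>k. a * c k"]) (simp add: K sum_distrib_left mult.assoc)
qed

lemma tp_add: "tp P \<Longrightarrow> tp Q \<Longrightarrow> tp (\<lambda>\<theta>. P \<theta> + Q \<theta>)"
  unfolding tp_def
proof (elim exE conjE)
  fix K c J d assume K: "finite K" "\<forall>\<theta>. P \<theta> = (\<Sum>k\<in>K. c k * emk k \<theta>)"
    and J: "finite J" "\<forall>\<theta>. Q \<theta> = (\<Sum>k\<in>J. d k * emk k \<theta>)"
  let ?c = "\<lambda>k. (if k \<in> K then c k else 0) + (if k \<in> J then d k else 0)"
  have "(\<Sum>k\<in>K \<union> J. ?c k * emk k \<theta>) = (\<Sum>k\<in>K \<union> J. (if k \<in> K then c k * emk k \<theta> else 0)) + (\<Sum>k\<in>K \<union> J. (if k \<in> J then d k * emk k \<theta> else 0))" for \<theta>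
    by (subst sum.distrib[symmetric]) (rule sum.cong, auto simp: distrib_right)
  also have "\<dots> \<theta> = (\<Sum>k\<in>K. c k * emk k \<theta>) + (\<Sum>k\<in>J. d k * emk k \<theta>)" for \<theta>
  proof -
    have "(\<Sum>k\<in>K \<union> J. (if k \<in> K then c k * emk k \<theta> else 0)) = (\<Sum>k\<in>(K \<union> J) \<inter> K. c k * emk k \<theta>)"
      by (rule sum.inter_restrict[symmetric]) (use K J in simp)
    moreover have "(\<Sum>k\<in>K \<union> J. (if k \<in> J then d k * emk k \<theta> else 0)) = (\<Sum>k\<in>(K \<union> J) \<inter> J. d k * emk k \<theta>)"
      by (rule sum.inter_restrict[symmetric]) (use K J in simp)
    moreover have "(K \<union> J) \<inter> K = K" "(K \<union> J) \<inter> J = J" by blast+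
    ultimately show ?thesis by simp
  qed
  finally show "\<exists>K c. finite K \<and> (\<forall>\<theta>. P \<theta> + Q \<theta> = (\<Sum>k\<in>K. c k * emk k \<theta>))"
    using K J by (intro exI[of _ "K \<union> J"] exI[of _ ?c]) auto
qed

lemma tp_sum: "finite I \<Longrightarrow> (\<And>i. i \<in> I \<Longrightarrow> tp (P i)) \<Longrightarrow> tp (\<lambda>\<theta>. \<Sum>i\<in>I. P i \<theta>)"
proof (induction I rule: finite_induct)
  case empty then show ?case using tp_const[of 0] by simp
next
  case (insert x F) then show ?case using tp_add[of "P x" "\<lambda>\<theta>. \<Sum>i\<in>F. P i \<theta>"] by simp
qed

lemma tp_mult: "tp P \<Longrightarrow> tp Q \<Longrightarrow> tp (\<lambda>\<theta>. P \<theta> * Q \<theta>)"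
proof -
  assume "tp P" "tp Q"
  then obtain K c J d where K: "finite K" "\<And>\<theta>. P \<theta> = (\<Sum>k\<in>K. c k * emk k \<theta>)"
    and J: "finite J" "\<And>\<theta>. Q \<theta> = (\<Sum>k\<in>J. d k * emk k \<theta>)"
    unfolding tp_def by metis
  have "(\<lambda>\<theta>. P \<theta> * Q \<theta>) = (\<lambda>\<theta>. \<Sum>k\<in>K. \<Sum>j\<in>J. (c k * d j) * emk (\<lambda>i. k i + j i) \<theta>)"
    by (simp add: K(2) J(2) sum_product emk_mult[symmetric] mult_ac)
  moreover have "tp (\<lambda>\<theta>. \<Sum>k\<in>K. \<Sum>j\<in>J. (c k * d j) * emk (\<lambda>i. k i + j i) \<theta>)"
    using K(1) J(1) by (intro tp_sum tp_scale tp_emk)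
  ultimately show ?thesis by simp
qed

definition Phi :: "real^'d \<Rightarrow> (real^'d) \<times> (real^'d)" where
  "Phi \<theta> = ((\<chi> i. cos (2 * pi * \<theta>$i)), (\<chi> i. sin (2 * pi * \<theta>$i)))"

definition dlt :: "'d \<Rightarrow> 'd \<Rightarrow> int" where "dlt i = (\<lambda>j. if j = i then 1 else 0)"

lemma int_inner_dlt: "int_inner (dlt i) \<theta> = \<theta>$i"
proof -
  have "(\<lambda>j. real_of_int (dlt i j) * \<theta>$j) = (\<lambda>j. if j = i then \<theta>$j else 0)"
    by (auto simp: dlt_def)
  then show ?thesis unfolding int_inner_def by (simp only:) simp
qed

lemma int_inner_mdlt: "int_inner (\<lambda>j. - dlt i j) \<theta> = - \<theta>$i"
  using int_inner_minus[of "dlt i"] int_inner_dlt by simp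

lemma emk_dlt: "emk (dlt i) \<theta> = exp (- (\<i> * complex_of_real (2 * pi * \<theta>$i)))"
  unfolding emk_def int_inner_dlt by (simp add: algebra_simps)

lemma emk_mdlt: "emk (\<lambda>j. - dlt i j) \<theta> = exp (\<i> * complex_of_real (2 * pi * \<theta>$i))"
  unfolding emk_def int_inner_mdlt by (simp add: algebra_simps)

lemma tp_cos: "tp (\<lambda>\<theta>. complex_of_real (cos (2 * pi * \<theta>$i)))"
proof -
  have "(\<lambda>\<theta>. complex_of_real (cos (2 * pi * \<theta>$i))) = (\<lambda>\<theta>. (1/2) * emk (\<lambda>j. - dlt i j) \<theta> + (1/2) * emk (dlt i) \<theta>)"
    by (rule ext) (simp add: emk_dlt emk_mdlt cos_of_real[symmetric] cos_exp_eq field_simps del: cos_of_real)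
  show ?thesis unfolding \<open>_ = _\<close> by (intro tp_add tp_scale tp_emk)
qed

lemma tp_sin: "tp (\<lambda>\<theta>. complex_of_real (sin (2 * pi * \<theta>$i)))"
proof -
  have "(\<lambda>\<theta>. complex_of_real (sin (2 * pi * \<theta>$i))) = (\<lambda>\<theta>. (1/(2*\<i>)) * emk (\<lambda>j. - dlt i j) \<theta> + (-1/(2*\<i>)) * emk (dlt i) \<theta>)"
    by (rule ext) (simp add: emk_dlt emk_mdlt sin_of_real[symmetric] sin_exp_eq field_simps del: sin_of_real)
  show ?thesis unfolding \<open>_ = _\<close> by (intro tp_add tp_scale tp_emk)
qed

lemma linear_cart_expand:
  fixes g :: "real^'d \<Rightarrow> real"
  assumes "linear g"
  shows "g a = (\<Sum>i\<in>UNIV. a$i * g (axis i 1))"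
proof -
  have "g a = g (\<Sum>i\<in>UNIV. (a$i) *\<^sub>R axis i 1)" using sum_axis_cart[of a] by simp
  also have "\<dots> = (\<Sum>i\<in>UNIV. a$i * g (axis i 1))"
    using assms by (simp add: linear_sum linear_scale)
  finally show ?thesis .
qed

lemma rpf_tp:
  fixes p :: "(real^'d) \<times> (real^'d) \<Rightarrow> real"
  assumes "real_polynomial_function p"
  shows "tp (\<lambda>\<theta>. complex_of_real (p (Phi \<theta>)))"
  using assms
proof (induction p)
  case (linear f)
  define g where "g a = f (a, 0)" for a
  define h where "h b = f (0, b)" for b
  have lf: "linear f" using linear bounded_linear.linear by blast
  have lg: "linear g" unfolding g_def
  proof (rule linearI)
    fix b1 b2 :: "real^'d"
    show "f (b1 + b2, 0) = f (b1, 0) + f (b2, 0)" using linear_add[OF lf, of "(b1,0)" "(b2,0)"] by simp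
  next
    fix r and b :: "real^'d"
    show "f (r *\<^sub>R b, 0) = r *\<^sub>R f (b, 0)" using linear_scale[OF lf, of r "(b,0)"] by simp
  qed
  have lh: "linear h" unfolding h_def
  proof (rule linearI)
    fix b1 b2 :: "real^'d"
    show "f (0, b1 + b2) = f (0, b1) + f (0, b2)" using linear_add[OF lf, of "(0,b1)" "(0,b2)"] by simp
  next
    fix r and b :: "real^'d"
    show "f (0, r *\<^sub>R b) = r *\<^sub>R f (0, b)" using linear_scale[OF lf, of r "(0,b)"] by simp
  qed
  have fgh: "f (a, b) = g a + h b" for a b
    unfolding g_def h_def using linear_add[OF lf, of "(a,0)" "(0,b)"] by simp
  have FE: "(\<lambda>\<theta>. complex_of_real (f (Phi \<theta>))) =
      (\<lambda>\<theta>. (\<Sum>i\<in>UNIV. complex_of_real (g (axis i 1)) * complex_of_real (cos (2 * pi * \<theta>$i))) +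
             (\<Sum>i\<in>UNIV. complex_of_real (h (axis i 1)) * complex_of_real (sin (2 * pi * \<theta>$i))))"
  proof (rule ext)
    fix \<theta> :: "real^'d"
    have e1: "g (\<chi> i. cos (2*pi*\<theta>$i)) = (\<Sum>i\<in>UNIV. cos (2*pi*\<theta>$i) * g (axis i 1))"
      using linear_cart_expand[OF lg, of "\<chi> i. cos (2*pi*\<theta>$i)"] by simp
    have e2: "h (\<chi> i. sin (2*pi*\<theta>$i)) = (\<Sum>i\<in>UNIV. sin (2*pi*\<theta>$i) * h (axis i 1))"
      using linear_cart_expand[OF lh, of "\<chi> i. sin (2*pi*\<theta>$i)"] by simp
    have "f (Phi \<theta>) = g (\<chi> i. cos (2*pi*\<theta>$i)) + h (\<chi> i. sin (2*pi*\<theta>$i))"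
      unfolding Phi_def by (rule fgh)
    then show "complex_of_real (f (Phi \<theta>)) = (\<Sum>i\<in>UNIV. complex_of_real (g (axis i 1)) * complex_of_real (cos (2 * pi * \<theta>$i))) +
             (\<Sum>i\<in>UNIV. complex_of_real (h (axis i 1)) * complex_of_real (sin (2 * pi * \<theta>$i)))"
      unfolding e1 e2 by (simp add: mult.commute)
  qed
  show ?case unfolding FE by (intro tp_add tp_sum tp_scale tp_cos tp_sin) auto
next
  case (const c) then show ?case by (simp add: tp_const)
next
  case (add f g) then show ?case by (simp add: tp_add)
next
  case (mult f g) then show ?case by (simp add: tp_mult)
qed

lemma pf_tp:
  fixes p :: "(real^'d) \<times> (real^'d) \<Rightarrow> complex"
  assumes "polynomial_function p"
  shows "tp (\<lambda>\<theta>. p (Phi \<theta>))"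
proof -
  have "real_polynomial_function (Re \<circ> p)" "real_polynomial_function (Im \<circ> p)"
    using assms bounded_linear_Re bounded_linear_Im unfolding polynomial_function_def by blast+
  then have "tp (\<lambda>\<theta>. complex_of_real (Re (p (Phi \<theta>))))" "tp (\<lambda>\<theta>. complex_of_real (Im (p (Phi \<theta>))))"
    using rpf_tp by (auto simp: o_def)
  then have "tp (\<lambda>\<theta>. complex_of_real (Re (p (Phi \<theta>))) + \<i> * complex_of_real (Im (p (Phi \<theta>))))"
    by (intro tp_add tp_scale)
  then show ?thesis by (simp add: complex_eq[symmetric])
qed

lemma Phi_eq_int:
  assumes "Phi \<theta> = Phi \<theta>'"
  shows "\<theta>$i - \<theta>'$i \<in> \<int>"
proof -
  have c: "cos (2 * pi * \<theta>$i) = cos (2 * pi * \<theta>'$i)" and s: "sin (2 * pi * \<theta>$i) = sin (2 * pi * \<theta>'$i)"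
    using assms unfolding Phi_def by (auto simp: vec_eq_iff)
  have "cis (2 * pi * \<theta>$i) = cis (2 * pi * \<theta>'$i)" using c s by (simp add: complex_eq_iff)
  then have "exp (\<i> * complex_of_real (2 * pi * \<theta>$i)) = exp (\<i> * complex_of_real (2 * pi * \<theta>'$i))"
    by (simp add: cis_conv_exp)
  then obtain n :: int where "\<i> * complex_of_real (2 * pi * \<theta>$i) = \<i> * complex_of_real (2 * pi * \<theta>'$i) + complex_of_real (real_of_int (2 * n) * pi) * \<i>"
    unfolding exp_eq by blast
  then have "Im (\<i> * complex_of_real (2 * pi * \<theta>$i)) = Im (\<i> * complex_of_real (2 * pi * \<theta>'$i) + complex_of_real (real_of_int (2 * n) * pi) * \<i>)"
    by simp
  then have "2 * pi * \<theta>$i = 2 * pi * \<theta>'$i + 2 * pi * of_int n" by simp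
  then have "2 * pi * (\<theta>$i - \<theta>'$i - of_int n) = 0" by (simp add: algebra_simps)
  then have "\<theta>$i - \<theta>'$i = of_int n" by simp
  then show ?thesis by simp
qed

lemma per_Phi:
  fixes \<theta> \<theta>' :: "real^'d"
  assumes "torus_periodic f" "Phi \<theta> = Phi \<theta>'"
  shows "f \<theta> = f \<theta>'"
proof -
  have "f (\<theta>' + (\<theta> - \<theta>')) = f \<theta>'"
    by (rule per_int[OF assms(1)]) (use Phi_eq_int[OF assms(2)] in simp)
  then show ?thesis by simp
qed

lemma cont_Phi: "continuous_on UNIV Phi"
  unfolding Phi_def
  by (intro continuous_on_Pair continuous_on_vec_lambda continuous_on_cos continuous_on_sin continuous_on_mult continuous_on_const)
     (simp_all add: continuous_on_component)

lemma lift: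
  fixes f :: "real^'d \<Rightarrow> complex"
  assumes cf: "continuous_on UNIV f" and pf: "torus_periodic f"
  shows "\<exists>F. continuous_on (Phi ` cbox 0 One) F \<and> (\<forall>\<theta>\<in>cbox 0 One. F (Phi \<theta>) = f \<theta>)"
proof -
  let ?S = "Phi ` cbox (0::real^'d) One"
  define F where "F y = f (SOME \<theta>. \<theta> \<in> cbox 0 One \<and> Phi \<theta> = y)" for y
  have FP: "F (Phi \<theta>) = f \<theta>" if "\<theta> \<in> cbox 0 One" for \<theta>
  proof -
    have "\<exists>\<theta>'. \<theta>' \<in> cbox 0 One \<and> Phi \<theta>' = Phi \<theta>" using that by blast
    from someI_ex[OF this] have "(SOME \<theta>'. \<theta>' \<in> cbox 0 One \<and> Phi \<theta>' = Phi \<theta>) \<in> cbox 0 One \<and>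
        Phi (SOME \<theta>'. \<theta>' \<in> cbox 0 One \<and> Phi \<theta>' = Phi \<theta>) = Phi \<theta>" .
    then show ?thesis unfolding F_def using per_Phi[OF pf] by blast
  qed
  have q: "quotient_map (top_of_set (cbox 0 One)) (top_of_set ?S) Phi"
  proof (rule continuous_imp_quotient_map)
    show "continuous_map (top_of_set (cbox 0 One)) (top_of_set ?S) Phi"
      unfolding continuous_map_subtopology_eu using continuous_on_subset[OF cont_Phi] by auto
    show "compact_space (top_of_set (cbox (0::real^'d) One))"
      by (rule compact_space_subtopology) (simp add: compactin_euclidean_iff)
    show "Hausdorff_space (top_of_set ?S)"
      by (rule Hausdorff_space_subtopology[OF Hausdorff_space_euclidean])
    show "Phi ` topspace (top_of_set (cbox 0 One)) = topspace (top_of_set ?S)" by simp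
  qed
  have "continuous_map (top_of_set (cbox 0 One)) euclidean (F \<circ> Phi)"
    unfolding continuous_map_iff_continuous
    by (rule continuous_on_eq[OF continuous_on_subset[OF cf]]) (auto simp: FP)
  from continuous_compose_quotient_map[OF q this]
  have "continuous_on ?S F" by simp
  then show ?thesis using FP by blast
qed

lemma int_tp_zero:
  fixes f :: "real^'d \<Rightarrow> complex"
  assumes cf: "continuous_on (cbox 0 One) f" and fc: "\<And>k. fourier_coeff f k = 0" and P: "tp P"
  shows "integral (cbox 0 One) (\<lambda>\<theta>. f \<theta> * P \<theta>) = 0"
proof -
  obtain K c where K: "finite K" "\<And>\<theta>. P \<theta> = (\<Sum>k\<in>K. c k * emk k \<theta>)"
    using P unfolding tp_def by metis
  have "(\<lambda>\<theta>. f \<theta> * P \<theta>) = (\<lambda>\<theta>. \<Sum>k\<in>K. c k * (f \<theta> * emk k \<theta>))"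
    by (simp add: K(2) sum_distrib_left mult_ac)
  moreover have "integral (cbox 0 One) (\<lambda>\<theta>. \<Sum>k\<in>K. c k * (f \<theta> * emk k \<theta>)) =
      (\<Sum>k\<in>K. integral (cbox 0 One) (\<lambda>\<theta>. c k * (f \<theta> * emk k \<theta>)))"
  proof (rule integral_sum[OF K(1)])
    fix k assume "k \<in> K"
    show "(\<lambda>\<theta>. c k * (f \<theta> * emk k \<theta>)) integrable_on cbox 0 One"
      by (rule integrable_continuous, rule continuous_on_mult[OF continuous_on_const continuous_on_mult[OF cf continuous_on_subset[OF cont_emk]]]) auto
  qed
  moreover have "integral (cbox 0 One) (\<lambda>\<theta>. f \<theta> * emk k \<theta>) = 0" for k
    using fc[of k] unfolding fourier_coeff_emk by simp
  ultimately show ?thesis by simp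
qed

lemma fourier_unique:
  fixes f :: "real^'d \<Rightarrow> complex"
  assumes cf: "continuous_on UNIV f" and pf: "torus_periodic f" and fc: "\<And>k. fourier_coeff f k = 0"
  shows "f \<theta> = 0"
proof -
  let ?B = "cbox (0::real^'d) One"
  have cfB: "continuous_on ?B f" using continuous_on_subset[OF cf] by auto
  have pcf: "torus_periodic (\<lambda>\<theta>. cnj (f \<theta>))" using pf unfolding torus_periodic_def by simp
  obtain G where G: "continuous_on (Phi ` ?B) G" "\<And>\<theta>. \<theta> \<in> ?B \<Longrightarrow> G (Phi \<theta>) = cnj (f \<theta>)"
    using lift[OF continuous_on_cnj[OF cf] pcf] by blast
  have cS: "compact (Phi ` ?B)"
    by (rule compact_continuous_image[OF continuous_on_subset[OF cont_Phi]]) auto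
  have "bounded (f ` ?B)" by (rule compact_imp_bounded[OF compact_continuous_image[OF cfB]]) simp
  then obtain M where M: "M > 0" "\<And>\<theta>. \<theta> \<in> ?B \<Longrightarrow> norm (f \<theta>) \<le> M"
    unfolding bounded_pos by auto
  define C where "C = M * Henstock_Kurzweil_Integration.content ?B"
  have C0: "C \<ge> 0" unfolding C_def using M(1) by simp
  define I where "I = integral ?B (\<lambda>\<theta>. f \<theta> * cnj (f \<theta>))"
  have intff: "(\<lambda>\<theta>. f \<theta> * cnj (f \<theta>)) integrable_on ?B"
    by (rule integrable_continuous, rule continuous_on_mult[OF cfB continuous_on_cnj[OF cfB]])
  have bound: "norm I \<le> C * e" if e: "e > 0" for e
  proof -
    obtain p where p: "polynomial_function p" "\<And>y. y \<in> Phi ` ?B \<Longrightarrow> norm (G y - p y) < e"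
      using Stone_Weierstrass_polynomial_function[OF cS G(1) e] by blast
    have tpP: "tp (\<lambda>\<theta>. p (Phi \<theta>))" by (rule pf_tp[OF p(1)])
    have cP: "continuous_on ?B (\<lambda>\<theta>. p (Phi \<theta>))"
      by (rule continuous_on_compose2[OF continuous_on_polymonial_function[OF p(1)] continuous_on_subset[OF cont_Phi]]) auto
    have intfp: "(\<lambda>\<theta>. f \<theta> * p (Phi \<theta>)) integrable_on ?B"
      by (rule integrable_continuous, rule continuous_on_mult[OF cfB cP])
    have z: "integral ?B (\<lambda>\<theta>. f \<theta> * p (Phi \<theta>)) = 0" by (rule int_tp_zero[OF cfB fc tpP])
    define J where "J = integral ?B (\<lambda>\<theta>. f \<theta> * (cnj (f \<theta>) - p (Phi \<theta>)))"
    have "J = integral ?B (\<lambda>\<theta>. f \<theta> * cnj (f \<theta>) - f \<theta> * p (Phi \<theta>))"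
      unfolding J_def by (simp add: algebra_simps)
    also have "\<dots> = I - integral ?B (\<lambda>\<theta>. f \<theta> * p (Phi \<theta>))"
      unfolding I_def by (rule integral_diff[OF intff intfp])
    finally have JI: "J = I" using z by simp
    have intJ: "((\<lambda>\<theta>. f \<theta> * (cnj (f \<theta>) - p (Phi \<theta>))) has_integral J) ?B"
      unfolding J_def
      by (rule integrable_integral, rule integrable_continuous,
          rule continuous_on_mult[OF cfB continuous_on_diff[OF continuous_on_cnj[OF cfB] cP]])
    have "norm J \<le> (M * e) * Henstock_Kurzweil_Integration.content ?B"
    proof (rule has_integral_bound[OF _ intJ])
      show "0 \<le> M * e" using M(1) e by simp
      fix \<theta> assume t: "\<theta> \<in> ?B"
      have "norm (f \<theta> * (cnj (f \<theta>) - p (Phi \<theta>))) = norm (f \<theta>) * norm (G (Phi \<theta>) - p (Phi \<theta>))"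
        using G(2)[OF t] by (simp add: norm_mult)
      also have "\<dots> \<le> M * e"
        using M M(2)[OF t] p(2)[of "Phi \<theta>"] t by (intro mult_mono) auto
      finally show "norm (f \<theta> * (cnj (f \<theta>) - p (Phi \<theta>))) \<le> M * e" .
    qed
    then show ?thesis using JI unfolding C_def by (simp add: mult_ac)
  qed
  have "norm I \<le> 0"
  proof (rule field_le_epsilon)
    fix e :: real assume e: "0 < e"
    have "norm I \<le> C * (e / (C + 1))" using bound[of "e / (C + 1)"] e C0 by simp
    also have "\<dots> \<le> e" using C0 e by (simp add: field_simps)
    finally show "norm I \<le> 0 + e" by simp
  qed
  then have I0: "I = 0" by simp
  have "((\<lambda>\<theta>. f \<theta> * cnj (f \<theta>)) has_integral 0) ?B"
    using integrable_integral[OF intff] I0 unfolding I_def by simp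
  moreover have "(\<lambda>\<theta>. complex_of_real ((norm (f \<theta>))^2)) = (\<lambda>\<theta>. f \<theta> * cnj (f \<theta>))"
    by (simp only: complex_norm_square)
  ultimately have "((\<lambda>\<theta>. complex_of_real ((norm (f \<theta>))^2)) has_integral 0) ?B"
    by simp
  from has_integral_linear[OF this bounded_linear_Re]
  have h0: "((\<lambda>\<theta>. (norm (f \<theta>))^2) has_integral 0) ?B" by (simp add: o_def)
  have cn: "continuous_on ?B (\<lambda>\<theta>. (norm (f \<theta>))^2)"
    by (intro continuous_on_power continuous_on_norm cfB)
  have ne: "box (0::real^'d) One \<noteq> {}" by (simp add: box_ne_empty)
  have zB: "f x = 0" if "x \<in> ?B" for x
    using has_integral_0_cbox_imp_0[OF cn _ h0 ne that] by simp
  obtain \<theta>' where "\<theta>' \<in> ?B" "f \<theta> = f \<theta>'" using per_reduce[OF pf] by blast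
  then show ?thesis using zB by simp
qed


lemma int_inner_diff: "int_inner (\<lambda>j. k j - l j) x = int_inner k x - int_inner l x"
  unfolding int_inner_def by (simp add: algebra_simps sum_subtractf)

lemma det_zero_col:
  assumes "s < n" "\<And>r. r < n \<Longrightarrow> A r s = 0"
  shows "mat_det n A = 0"
  unfolding mat_det_def
proof (rule sum.neutral, rule ballI)
  fix p assume "p \<in> {p. p permutes {..<n}}"
  then have p: "p permutes {..<n}" by simp
  obtain i where i: "p i = s" using p by (metis permutes_surj surj_def)
  have "i < n"
  proof (rule ccontr)
    assume "\<not> i < n"
    then have "p i = i" using p unfolding permutes_def by simp
    then show False using i assms(1) \<open>\<not> i < n\<close> by simp
  qed
  then have "(\<Prod>i<n. A i (p i)) = 0" using assms(2) i by (intro prod_zero) auto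
  then show "of_int (sign p) * (\<Prod>i<n. A i (p i)) = 0" by simp
qed

theorem lemma1:
  fixes \<omega> :: "real^'d"
    and n :: nat
    and B :: "nat \<Rightarrow> nat \<Rightarrow> complex"
    and bs :: "(nat \<times> complex) list"
    and U :: "real^'d \<Rightarrow> nat \<Rightarrow> nat \<Rightarrow> complex"
  assumes ri: "rationally_independent \<omega>"
    and jnf: "jordan_nf_grouped n B bs"
    and per: "torus_periodic U"
    and cont: "\<And>r s. r < n \<Longrightarrow> s < n \<Longrightarrow> continuous_on UNIV (\<lambda>\<theta>. U \<theta> r s)"
    and gl: "\<And>\<theta>. mat_det n (U \<theta>) \<noteq> 0"
    and eq: "\<And>\<theta> r s. r < n \<Longrightarrow> s < n \<Longrightarrow>
        ((\<lambda>t. U (\<theta> + t *\<^sub>R \<omega>) r s) has_vector_derivative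
          (mat_mult n B (U \<theta>) r s - mat_mult n (U \<theta>) (mat_cnj B) r s)) (at 0)"
  shows
    "(\<forall>\<alpha>\<in>jordan_spectrum bs. \<forall>\<beta>\<in>jordan_spectrum bs. \<alpha> - cnj \<beta> \<notin> resonances \<omega> \<longrightarrow>
        (\<forall>\<theta> r s. r < n \<and> s < n \<and> B r r = \<alpha> \<and> B s s = \<beta> \<longrightarrow> U \<theta> r s = 0))
     \<and> ((\<exists>\<beta>\<in>jordan_spectrum bs. \<forall>\<alpha>\<in>jordan_spectrum bs. \<alpha> - cnj \<beta> \<notin> resonances \<omega>) \<longrightarrow>
        (\<forall>\<theta>. mat_det n (U \<theta>) = 0))
     \<and> (\<forall>\<alpha>\<in>jordan_spectrum bs. \<forall>\<beta>\<in>jordan_spectrum bs. \<forall>k. (\<exists>i. k i \<noteq> 0) \<and>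
          \<alpha> - cnj \<beta> = 2 * pi * \<i> * complex_of_real (int_inner k \<omega>) \<longrightarrow>
        (\<forall>k' r s. k' \<noteq> k \<and> r < n \<and> s < n \<and> B r r = \<alpha> \<and> B s s = \<beta> \<longrightarrow>
           fourier_coeff (\<lambda>\<theta>. U \<theta> r s) k' = 0))"
proof -
  define lam where "lam k = 2 * pi * \<i> * complex_of_real (int_inner k \<omega>)" for k :: "'d \<Rightarrow> int"
  define F where "F k a b = fourier_coeff (\<lambda>\<theta>. U \<theta> a b) k" for k a b
  have feq: "lam k * F k r s = mat_mult n B (F k) r s - mat_mult n (F k) (mat_cnj B) r s"
    if "r < n" "s < n" for k r s
    using fourier_eq[of U n \<omega> B r s k, OF per cont eq that] unfolding lam_def F_def by simp
  have Fz: "F k r s = 0" if "r < n" "s < n" "B r r - cnj (B s s) \<noteq> lam k" for k r s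
    by (rule jordan_sylvester[where lam="lam k" and C="F k", OF jnf feq that])
  have perE: "torus_periodic (\<lambda>\<theta>. U \<theta> r s)" for r s
    using per unfolding torus_periodic_def by simp
  have P1: "U \<theta> r s = 0" if "r < n" "s < n" "B r r - cnj (B s s) \<notin> resonances \<omega>" for \<theta> r s
  proof (rule fourier_unique[OF cont[OF that(1,2)] perE])
    fix k
    have "lam k \<in> resonances \<omega>" unfolding lam_def resonances_def by blast
    then have "B r r - cnj (B s s) \<noteq> lam k" using that(3) by auto
    from Fz[OF that(1,2) this] show "fourier_coeff (\<lambda>\<theta>. U \<theta> r s) k = 0"
      unfolding F_def .
  qed
  have part1: "\<forall>\<alpha>\<in>jordan_spectrum bs. \<forall>\<beta>\<in>jordan_spectrum bs. \<alpha> - cnj \<beta> \<notin> resonances \<omega> \<longrightarrow>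
        (\<forall>\<theta> r s. r < n \<and> s < n \<and> B r r = \<alpha> \<and> B s s = \<beta> \<longrightarrow> U \<theta> r s = 0)"
    using P1 by auto
  have part2: "(\<exists>\<beta>\<in>jordan_spectrum bs. \<forall>\<alpha>\<in>jordan_spectrum bs. \<alpha> - cnj \<beta> \<notin> resonances \<omega>) \<longrightarrow>
        (\<forall>\<theta>. mat_det n (U \<theta>) = 0)"
  proof (intro impI allI)
    fix \<theta>
    assume "\<exists>\<beta>\<in>jordan_spectrum bs. \<forall>\<alpha>\<in>jordan_spectrum bs. \<alpha> - cnj \<beta> \<notin> resonances \<omega>"
    then obtain \<beta> where b: "\<beta> \<in> jordan_spectrum bs" "\<And>\<alpha>. \<alpha> \<in> jordan_spectrum bs \<Longrightarrow> \<alpha> - cnj \<beta> \<notin> resonances \<omega>"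
      by blast
    obtain s where s: "s < n" "B s s = \<beta>" using jnf_spec_ex[OF jnf b(1)] by blast
    show "mat_det n (U \<theta>) = 0"
    proof (rule det_zero_col[OF s(1)])
      fix r assume r: "r < n"
      show "U \<theta> r s = 0" using P1[OF r s(1)] b(2)[OF jnf_spec[OF jnf r]] s(2) by simp
    qed
  qed
  have part3: "\<forall>\<alpha>\<in>jordan_spectrum bs. \<forall>\<beta>\<in>jordan_spectrum bs. \<forall>k. (\<exists>i. k i \<noteq> 0) \<and>
          \<alpha> - cnj \<beta> = 2 * pi * \<i> * complex_of_real (int_inner k \<omega>) \<longrightarrow>
        (\<forall>k' r s. k' \<noteq> k \<and> r < n \<and> s < n \<and> B r r = \<alpha> \<and> B s s = \<beta> \<longrightarrow>
           fourier_coeff (\<lambda>\<theta>. U \<theta> r s) k' = 0)"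
  proof (intro ballI allI impI)
    fix \<alpha> \<beta> k k' r s
    assume h: "(\<exists>i. k i \<noteq> 0) \<and> \<alpha> - cnj \<beta> = 2 * pi * \<i> * complex_of_real (int_inner k \<omega>)"
      and h2: "k' \<noteq> k \<and> r < n \<and> s < n \<and> B r r = \<alpha> \<and> B s s = \<beta>"
    have "lam k' \<noteq> lam k"
    proof
      assume "lam k' = lam k"
      then have "complex_of_real (2 * pi) * \<i> * complex_of_real (int_inner k' \<omega>) = complex_of_real (2 * pi) * \<i> * complex_of_real (int_inner k \<omega>)"
        unfolding lam_def by simp
      then have "int_inner k' \<omega> = int_inner k \<omega>" by (simp only: mult_cancel_left) simp
      then have "int_inner (\<lambda>j. k j - k' j) \<omega> = 0" by (simp add: int_inner_diff)
      moreover have "\<exists>i. k i - k' i \<noteq> 0"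
      proof -
        from h2 have "k' \<noteq> k" by simp
        then obtain i where "k' i \<noteq> k i" by auto
        then show ?thesis by (intro exI[of _ i]) simp
      qed
      ultimately show False
        using ri[unfolded rationally_independent_def, rule_format, of "\<lambda>j. k j - k' j"] by simp
    qed
    moreover have "B r r - cnj (B s s) = lam k"
    proof -
      from h2 have e1: "B r r = \<alpha>" and e2: "B s s = \<beta>" by blast+
      from h have "\<alpha> - cnj \<beta> = lam k" unfolding lam_def by blast
      then show ?thesis unfolding e1 e2 .
    qed
    ultimately have "B r r - cnj (B s s) \<noteq> lam k'" by simp
    from h2 have "r < n" "s < n" by blast+
    from Fz[OF this \<open>B r r - cnj (B s s) \<noteq> lam k'\<close>]
    show "fourier_coeff (\<lambda>\<theta>. U \<theta> r s) k' = 0" unfolding F_def .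
  qed
  show ?thesis by (intro conjI part1 part2 part3)
qed

end
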